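(* Let $a,b>-1$, $n\ge1$, $\lambda$ a partition with $\ell(\lambda)\le n$, and $\sigma=(a+b+1)/2$. Then $$\frac{\mathfrak P_\lambda(x_1,\dots,x_n;a,b)}{\mathfrak P_\lambda(1,\dots,1;a,b)}=\sum_{\mu}\frac{I_\mu(\lambda;1;\sigma+n)\,s_\mu(x_1-1,\dots,x_n-1)}{c(n,\mu;a)},$$ the sum over partitions $\mu$ with $\ell(\mu)\le n$, where $s_\mu$ is the Schur polynomial and $$c(n,\mu;a)=2^{|\mu|}\prod_{i=1}^n\frac{\Gamma(\mu_i+n-i+1)\,\Gamma(\mu_i+n-i+a+1)}{\Gamma(n-i+1)\,\Gamma(n-i+a+1)}.$$ Equivalently, with $l_i=\lambda_i+n-i+\sigma$, the numerator $I_\mu(\lambda;1;\sigma+n)$ equals the factorial Schur polynomial $s_\mu(l_1^2,\dots,l_n^2\mid \sigma^2,(\sigma+1)^2,(\sigma+2)^2,\dots)$.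
   Context: $\mathfrak p_l(x;a,b)=\frac{\Gamma(l+a+1)}{\Gamma(l+1)\Gamma(a+1)}{}_2F_1(-l,l+a+b+1;a+1;\frac{1-x}2)$ are the classical Jacobi polynomials; $\mathfrak P_\lambda(x_1,\dots,x_n;a,b)=\det_{1\le i,j\le n}[\mathfrak p_{\lambda_i+n-i}(x_j;a,b)]/\prod_{i<j}(x_i-x_j)$ (a polynomial, so its value at $(1,\dots,1)$ makes sense). For a sequence $A=(A_1,A_2,\dots)$, $(y\mid A)^m=(y-A_1)\cdots(y-A_m)$, $(y\mid A)^0=1$, and the factorial Schur polynomial is $s_\mu(y_1,\dots,y_n\mid A)=\det_{1\le i,j\le n}[(y_i\mid A)^{\mu_j+n-j}]/\prod_{i<j}(y_i-y_j)$. For $\theta=1$ the interpolation $BC_n$ polynomial is $I_\mu(x_1,\dots,x_n;1;h)=s_\mu\big((x_1+h-1)^2,\dots,(x_n+h-n)^2\mid (h-n)^2,(h-n+1)^2,(h-n+2)^2,\dots\big)$, and $I_\mu(\lambda;1;h_0)$ denotes its value at $x=\lambda$, $h=h_0$. *)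

theory Defs
  imports "HOL-Analysis.Analysis" "Jordan_Normal_Form.Determinant"
begin

text \<open>Conventions: indices are 0-based. A vector (x_1,...,x_n) is a function
  x :: nat => real with x i standing for x_(i+1), i < n. A partition with at most
  n parts is a nonincreasing list of naturals of length exactly n (padded with zeros).
  A sequence (A_1, A_2, ...) is a function A :: nat => real with A k = A_(k+1).\<close>

definition partitions :: "nat \<Rightarrow> nat list set" where
  "partitions n = {mu. length mu = n \<and> sorted_wrt (\<lambda>p q. p \<ge> q) mu}"

definition hyp2F1_term :: "nat \<Rightarrow> real \<Rightarrow> real \<Rightarrow> real \<Rightarrow> real" where
  "hyp2F1_term l c d z =
     (\<Sum>k = 0..l. pochhammer (- real l) k * pochhammer c k / (pochhammer d k * fact k) * z ^ k)"

definition jacobi :: "nat \<Rightarrow> real \<Rightarrow> real \<Rightarrow> real \<Rightarrow> real" where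
  "jacobi l a b x = Gamma (real l + a + 1) / (Gamma (real l + 1) * Gamma (a + 1)) *
     hyp2F1_term l (real l + a + b + 1) (a + 1) ((1 - x) / 2)"

definition vandermonde :: "nat \<Rightarrow> (nat \<Rightarrow> real) \<Rightarrow> real" where
  "vandermonde n x = (\<Prod>i<n. \<Prod>j\<in>{i<..<n}. (x i - x j))"

text \<open>Value of the (polynomial) ratio g at an arbitrary point x, including points with
  coinciding coordinates: the limit of g along x + t*(0,1,...,n-1), t -> 0, whose
  coordinates are pairwise distinct for all small t ~= 0. For a polynomial this is its value.\<close>
definition polyext :: "((nat \<Rightarrow> real) \<Rightarrow> real) \<Rightarrow> (nat \<Rightarrow> real) \<Rightarrow> real" where
  "polyext g x = Lim (at (0::real)) (\<lambda>t. g (\<lambda>i. x i + t * real i))"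

definition jacobiP :: "nat \<Rightarrow> nat list \<Rightarrow> real \<Rightarrow> real \<Rightarrow> (nat \<Rightarrow> real) \<Rightarrow> real" where
  "jacobiP n lam a b x = polyext
     (\<lambda>y. det (mat n n (\<lambda>(i, j). jacobi (lam ! i + n - 1 - i) a b (y j))) / vandermonde n y) x"

definition fpow :: "(nat \<Rightarrow> real) \<Rightarrow> real \<Rightarrow> nat \<Rightarrow> real" where
  "fpow A y m = (\<Prod>k<m. (y - A k))"

definition fschur :: "nat \<Rightarrow> nat list \<Rightarrow> (nat \<Rightarrow> real) \<Rightarrow> (nat \<Rightarrow> real) \<Rightarrow> real" where
  "fschur n mu y A = polyext
     (\<lambda>z. det (mat n n (\<lambda>(i, j). fpow A (z i) (mu ! j + n - 1 - j))) / vandermonde n z) y"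

definition schur :: "nat \<Rightarrow> nat list \<Rightarrow> (nat \<Rightarrow> real) \<Rightarrow> real" where
  "schur n mu y = fschur n mu y (\<lambda>_. 0)"

definition interpI :: "nat \<Rightarrow> nat list \<Rightarrow> (nat \<Rightarrow> real) \<Rightarrow> real \<Rightarrow> real" where
  "interpI n mu x h = fschur n mu (\<lambda>i. (x i + h - real (i + 1)) ^ 2)
     (\<lambda>k. (h - real n + real k) ^ 2)"

definition cconst :: "nat \<Rightarrow> nat list \<Rightarrow> real \<Rightarrow> real" where
  "cconst n mu a = 2 ^ sum_list mu *
     (\<Prod>i<n. Gamma (real (mu ! i + n - 1 - i) + 1) * Gamma (real (mu ! i + n - 1 - i) + a + 1)
            / (Gamma (real (n - 1 - i) + 1) * Gamma (real (n - 1 - i) + a + 1)))"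

end

theory Submission
  imports Defs
begin


definition dd :: "nat \<Rightarrow> (nat \<Rightarrow> nat \<Rightarrow> real) \<Rightarrow> real" where
  "dd n F = det (mat n n (\<lambda>(i,j). F i j))"

lemma dd_leib: "dd n F = (\<Sum>p\<in>{p. p permutes {0..<n}}. signof p * (\<Prod>i=0..<n. F i (p i)))"
  unfolding dd_def
  by (subst det_def'[of _ n]) (auto intro!: sum.cong prod.cong simp: permutes_in_image)

lemma dd_cong: "(\<And>i j. i < n \<Longrightarrow> j < n \<Longrightarrow> F i j = G i j) \<Longrightarrow> dd n F = dd n G"
  unfolding dd_leib
  by (auto intro!: sum.cong prod.cong simp: permutes_in_image)

lemma dd_scale: "dd n (\<lambda>i j. r i * s j * F i j) = (\<Prod>i<n. r i) * (\<Prod>j<n. s j) * dd n F"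
proof -
  have "signof p * (\<Prod>i=0..<n. r i * s (p i) * F i (p i)) =
        (\<Prod>i<n. r i) * (\<Prod>j<n. s j) * (signof p * (\<Prod>i=0..<n. F i (p i)))"
    if p: "p permutes {0..<n}" for p
  proof -
    have "(\<Prod>i=0..<n. s (p i)) = (\<Prod>j=0..<n. s j)"
      using prod.permute[OF p, of s] by (simp add: comp_def)
    then show ?thesis by (simp add: prod.distrib atLeast0LessThan)
  qed
  then show ?thesis unfolding dd_leib sum_distrib_left
    by (auto intro!: sum.cong)
qed

lemma dd_row0: "k < n \<Longrightarrow> (\<And>j. j < n \<Longrightarrow> F k j = 0) \<Longrightarrow> dd n F = 0"
  unfolding dd_leib
  by (rule sum.neutral) (auto intro!: prod_zero bexI[of _ k] simp: permutes_in_image)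

lemma dd_transpose: "dd n (\<lambda>i j. F j i) = dd n F"
proof -
  have "mat n n (\<lambda>(i,j). F j i) = transpose_mat (mat n n (\<lambda>(i,j). F i j))"
    by (rule eq_matI) auto
  then show ?thesis unfolding dd_def
    by (simp add: det_transpose[of _ n])
qed

lemma dd_identical_rows:
  assumes "i \<noteq> j" "i < n" "j < n" "\<And>c. c < n \<Longrightarrow> F i c = F j c"
  shows "dd n F = 0"
  unfolding dd_def
  by (rule det_identical_rows[of _ n i j]) (use assms in \<open>auto intro!: eq_vecI\<close>)

lemma dd_permute_rows:
  assumes p: "p permutes {0..<n}"
  shows "dd n (\<lambda>i j. F (p i) j) = signof p * dd n F"
proof -
  have "mat n n (\<lambda>(i,j). F (p i) j) = mat n n (\<lambda>(i,j). mat n n (\<lambda>(i,j). F i j) $$ (p i, j))"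
    by (rule eq_matI) (use p in \<open>auto simp: permutes_in_image\<close>)
  then show ?thesis unfolding dd_def
    using det_permute_rows[OF _ p, of "mat n n (\<lambda>(i,j). F i j)"] by simp
qed

lemma dd_mult: "dd n (\<lambda>i j. \<Sum>r<n. E i r * U r j) = dd n E * dd n U"
proof -
  have "mat n n (\<lambda>(i,j). \<Sum>r<n. E i r * U r j) = mat n n (\<lambda>(i,j). E i j) * mat n n (\<lambda>(i,j). U i j)"
    by (rule eq_matI) (auto simp: scalar_prod_def atLeast0LessThan intro!: sum.cong)
  then show ?thesis unfolding dd_def
    by (simp add: det_mult[of _ n])
qed

lemma dd_lower: "(\<And>i j. i < j \<Longrightarrow> j < n \<Longrightarrow> F i j = 0) \<Longrightarrow> dd n F = (\<Prod>i<n. F i i)"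
  unfolding dd_def
  by (subst det_lower_triangular[of n]) 
     (auto simp: diag_mat_def prod.distinct_set_conv_list[symmetric] atLeast0LessThan)

lemma dd_upper: "(\<And>i j. j < i \<Longrightarrow> i < n \<Longrightarrow> F i j = 0) \<Longrightarrow> dd n F = (\<Prod>i<n. F i i)"
  unfolding dd_def
  by (subst det_upper_triangular[of _ n]) 
     (auto simp: upper_triangular_def diag_mat_def prod.distinct_set_conv_list[symmetric] atLeast0LessThan)



fun ec :: "(nat \<Rightarrow> real) \<Rightarrow> (nat \<Rightarrow> real) \<Rightarrow> nat \<Rightarrow> nat \<Rightarrow> real" where
  "ec A q 0 d = (if d = 0 then 1 else 0)"
| "ec A q (Suc k) d = (if d = 0 then 0 else ec A q k (d - 1)) + (q d - A k) * ec A q k d"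

definition Mw :: "(nat \<Rightarrow> real) \<Rightarrow> nat \<Rightarrow> real \<Rightarrow> real" where
  "Mw q d y = (\<Prod>s<d. y - q s)"

lemma ec_zero: "k < d \<Longrightarrow> ec A q k d = 0"
  by (induction k arbitrary: d) auto

lemma ec_diag: "ec A q k k = 1"
  by (induction k) (auto simp: ec_zero)

lemma Mw_Suc: "Mw q (Suc d) y = Mw q d y * (y - q d)"
  by (simp add: Mw_def)

lemma newton: "fpow A y k = (\<Sum>d\<le>k. ec A q k d * Mw q d y)"
proof (induction k)
  case 0
  then show ?case by (simp add: fpow_def Mw_def)
next
  case (Suc k)
  have "(\<Sum>d\<le>Suc k. ec A q (Suc k) d * Mw q d y) =
        (\<Sum>d\<le>Suc k. (if d = 0 then 0 else ec A q k (d - 1)) * Mw q d y) +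
        (\<Sum>d\<le>Suc k. (q d - A k) * ec A q k d * Mw q d y)"
    by (simp only: ec.simps distrib_right sum.distrib)
  also have "(\<Sum>d\<le>Suc k. (if d = 0 then 0 else ec A q k (d - 1)) * Mw q d y) =
        (\<Sum>d\<le>k. ec A q k d * Mw q d y * (y - q d))"
    by (subst sum.atMost_Suc_shift) (simp add: Mw_Suc mult.assoc)
  also have "(\<Sum>d\<le>Suc k. (q d - A k) * ec A q k d * Mw q d y) =
        (\<Sum>d\<le>k. (q d - A k) * ec A q k d * Mw q d y)"
    by (simp add: ec_zero)
  also have "(\<Sum>d\<le>k. ec A q k d * Mw q d y * (y - q d)) + (\<Sum>d\<le>k. (q d - A k) * ec A q k d * Mw q d y)
      = (\<Sum>d\<le>k. ec A q k d * Mw q d y * (y - q d) + (q d - A k) * ec A q k d * Mw q d y)"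
    by (simp only: sum.distrib)
  also have "\<dots> = (\<Sum>d\<le>k. (ec A q k d * Mw q d y) * (y - A k))"
    by (rule sum.cong) (simp_all add: algebra_simps)
  also have "\<dots> = (\<Sum>d\<le>k. ec A q k d * Mw q d y) * (y - A k)"
    by (simp add: sum_distrib_right)
  also have "\<dots> = fpow A y (Suc k)"
    by (simp add: Suc.IH[symmetric] fpow_def)
  finally show ?case by simp
qed

lemma Mw_node: "s < d \<Longrightarrow> Mw q d (q s) = 0"
  unfolding Mw_def by (rule prod_zero) auto

lemma newton_node:
  assumes "s < n"
  shows "fpow A (q s) k = (\<Sum>d<n. ec A q k d * Mw q d (q s))"
proof -
  have "fpow A (q s) k = (\<Sum>d\<in>{..k} \<inter> {..<n}. ec A q k d * Mw q d (q s))"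
    unfolding newton[of A "q s" k q]
    apply (rule sum.mono_neutral_right)
    using assms apply (auto simp: Mw_node)
    by (metis Mw_node le_less_trans mult_eq_0_iff not_less)
  also have "\<dots> = (\<Sum>d<n. ec A q k d * Mw q d (q s))"
    apply (rule sum.mono_neutral_left) apply (auto simp: ec_zero)
    by (metis ec_zero not_le)
  finally show ?thesis .
qed

definition ScN :: "nat \<Rightarrow> (nat \<Rightarrow> real) \<Rightarrow> (nat \<Rightarrow> nat) \<Rightarrow> (nat \<Rightarrow> real) \<Rightarrow> real" where
  "ScN n A \<kappa> z = dd n (\<lambda>i r. ec A (\<lambda>s. z (n - Suc s)) (\<kappa> i) (n - Suc r))"

lemma alt_factor: "dd n (\<lambda>i j. fpow A (z j) (\<kappa> i)) = ScN n A \<kappa> z * vandermonde n z"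
proof -
  define q where "q = (\<lambda>s. z (n - Suc s))"
  have zq: "z j = q (n - Suc j)" if "j < n" for j
    using that by (simp add: q_def Suc_diff_Suc)
  have 1: "fpow A (z j) (\<kappa> i) = (\<Sum>r<n. ec A q (\<kappa> i) (n - Suc r) * Mw q (n - Suc r) (z j))"
    if "j < n" for i j
  proof -
    have "fpow A (z j) (\<kappa> i) = (\<Sum>d<n. ec A q (\<kappa> i) d * Mw q d (q (n - Suc j)))"
      using newton_node[of "n - Suc j" n A q "\<kappa> i"] that zq[OF that] by simp
    also have "\<dots> = (\<Sum>r<n. ec A q (\<kappa> i) (n - Suc r) * Mw q (n - Suc r) (z j))"
      by (subst sum.nat_diff_reindex[symmetric]) (simp add: zq[OF that])
    finally show ?thesis .
  qed
  have "dd n (\<lambda>i j. fpow A (z j) (\<kappa> i)) =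
        dd n (\<lambda>i j. \<Sum>r<n. ec A q (\<kappa> i) (n - Suc r) * Mw q (n - Suc r) (z j))"
    by (rule dd_cong) (simp add: 1)
  also have "\<dots> = ScN n A \<kappa> z * dd n (\<lambda>r j. Mw q (n - Suc r) (z j))"
    by (subst dd_mult) (simp add: ScN_def q_def)
  also have "dd n (\<lambda>r j. Mw q (n - Suc r) (z j)) = (\<Prod>j<n. Mw q (n - Suc j) (z j))"
    by (rule dd_lower) (simp add: zq Mw_node)
  also have "\<dots> = vandermonde n z"
    unfolding vandermonde_def
  proof (rule prod.cong[OF refl])
    fix j assume j: "j \<in> {..<n}"
    show "Mw q (n - Suc j) (z j) = (\<Prod>p\<in>{j<..<n}. z j - z p)"
      unfolding Mw_def q_def
      by (rule prod.reindex_bij_witness[where i="\<lambda>p. n - Suc p" and j="\<lambda>s. n - Suc s"])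
         (use j in auto)
  qed
  finally show ?thesis .
qed



lemma ScN_delta: "ScN n A (\<lambda>i. n - Suc i) z = 1"
  unfolding ScN_def
  by (subst dd_upper) (auto simp: ec_zero ec_diag)

lemma ec_00: "ec (\<lambda>_. 0) (\<lambda>_. 0) k d = (if k = d then 1 else 0)"
  by (induction k arbitrary: d) auto

lemma ScN_zero_pt: "0 < n \<Longrightarrow> n \<le> \<kappa> 0 \<Longrightarrow> ScN n (\<lambda>_. 0) \<kappa> (\<lambda>_. 0) = 0"
  unfolding ScN_def
  by (rule dd_row0[of 0]) (auto simp: ec_00)

lemma ec_cont:
  assumes "\<And>s. isCont (\<lambda>t. f t s) t0"
  shows "isCont (\<lambda>t. ec A (f t) k d) t0"
proof (induction k arbitrary: d)
  case 0
  then show ?case by simp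
next
  case (Suc k)
  have "isCont (\<lambda>t. if d = 0 then 0 else ec A (f t) k (d - 1)) t0"
    by (cases "d = 0") (auto intro: Suc.IH)
  then show ?case by (auto intro!: continuous_intros assms Suc.IH)
qed

lemma dd_cont:
  assumes "\<And>i j. isCont (\<lambda>t. F t i j) t0"
  shows "isCont (\<lambda>t. dd n (F t)) t0"
  unfolding dd_leib
  by (auto intro!: continuous_intros assms)

lemma ScN_cont: "isCont (\<lambda>t. ScN n A \<kappa> (\<lambda>i. x i + t * v i)) t0"
  unfolding ScN_def
  by (intro dd_cont ec_cont) (auto intro!: continuous_intros)

definition distinctn :: "nat \<Rightarrow> (nat \<Rightarrow> real) \<Rightarrow> bool" where
  "distinctn n z \<longleftrightarrow> (\<forall>i<n. \<forall>j<n. i \<noteq> j \<longrightarrow> z i \<noteq> z j)"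

lemma eventually_distinct:
  "eventually (\<lambda>t. distinctn n (\<lambda>i. x i + t * real i)) (at (0::real))"
proof -
  have "eventually (\<lambda>t. x i + t * real i \<noteq> x j + t * real j) (at (0::real))"
    if "i \<noteq> j" for i j
  proof (cases "x i = x j")
    case True
    have "eventually (\<lambda>t. t \<noteq> 0) (at (0::real))"
      by (simp add: eventually_at_filter)
    then show ?thesis
      by eventually_elim (use True that in auto)
  next
    case False
    have "((\<lambda>t. x i + t * real i - (x j + t * real j)) \<longlongrightarrow> x i + 0 * real i - (x j + 0 * real j)) (at (0::real))"
      by (intro tendsto_intros)
    then have "eventually (\<lambda>t. x i + t * real i - (x j + t * real j) \<noteq> 0) (at (0::real))"
      by (rule tendsto_imp_eventually_ne) (use False in simp)
    then show ?thesis by eventually_elim simp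
  qed
  then have "eventually (\<lambda>t. \<forall>p\<in>{..<n} \<times> {..<n}. fst p \<noteq> snd p \<longrightarrow>
       x (fst p) + t * real (fst p) \<noteq> x (snd p) + t * real (snd p)) (at (0::real))"
    by (intro eventually_ball_finite) (auto intro: eventually_mono)
  then show ?thesis
    by eventually_elim (auto simp: distinctn_def)
qed

lemma polyext_eq:
  assumes "\<And>z. distinctn n z \<Longrightarrow> g z = h z"
    and "isCont (\<lambda>t. h (\<lambda>i. x i + t * real i)) 0"
  shows "polyext g x = h x"
proof -
  have "((\<lambda>t. h (\<lambda>i. x i + t * real i)) \<longlongrightarrow> h x) (at 0)"
    using assms(2) unfolding isCont_def by simp
  moreover have "eventually (\<lambda>t. h (\<lambda>i. x i + t * real i) = g (\<lambda>i. x i + t * real i)) (at (0::real))"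
    using eventually_distinct[of n x] by eventually_elim (simp add: assms(1))
  ultimately have "((\<lambda>t. g (\<lambda>i. x i + t * real i)) \<longlongrightarrow> h x) (at 0)"
    using tendsto_cong by force
  then show ?thesis unfolding polyext_def
    by (intro tendsto_Lim) auto
qed



definition DecL :: "nat \<Rightarrow> nat \<Rightarrow> nat list set" where
  "DecL n N = {ks. length ks = n \<and> sorted_wrt (>) ks \<and> set ks \<subseteq> {..<N}}"

lemma DecL_distinct: "sorted_wrt (>) (ks::nat list) \<Longrightarrow> distinct ks"
proof -
  assume "sorted_wrt (>) ks"
  then have "sorted_wrt (<) (rev ks)" by (simp add: sorted_wrt_rev)
  then show ?thesis by (metis distinct_rev strict_sorted_iff)
qed

lemma DecL_unique:
  assumes "sorted_wrt (>) (ks::nat list)" "sorted_wrt (>) ks'" "set ks = set ks'"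
  shows "ks = ks'"
proof -
  have "sorted_wrt (<) (rev ks)" "sorted_wrt (<) (rev ks')"
    using assms by (simp_all add: sorted_wrt_rev)
  then have a: "sorted (rev ks)" "distinct (rev ks)" "sorted (rev ks')" "distinct (rev ks')"
    using strict_sorted_iff by blast+
  have "rev ks = rev ks'"
    by (rule sorted_distinct_set_unique[OF a]) (simp add: assms(3))
  then show ?thesis by simp
qed

definition idx :: "nat list \<Rightarrow> nat \<Rightarrow> nat" where
  "idx ks x = (LEAST j. ks ! j = x)"

lemma idx_props:
  assumes "x \<in> set ks"
  shows "idx ks x < length ks" "ks ! idx ks x = x"
proof -
  obtain j where j: "j < length ks" "ks ! j = x" using assms by (auto simp: in_set_conv_nth)
  show "ks ! idx ks x = x" unfolding idx_def by (rule LeastI[of _ j]) (rule j(2))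
  have "idx ks x \<le> j" unfolding idx_def by (rule Least_le) (rule j(2))
  then show "idx ks x < length ks" using j by simp
qed

definition hcb :: "nat \<Rightarrow> nat list \<times> (nat \<Rightarrow> nat) \<Rightarrow> (nat \<Rightarrow> nat)" where
  "hcb n = (\<lambda>(ks, p). restrict (\<lambda>i. ks ! (p i)) {0..<n})"

definition InjF :: "nat \<Rightarrow> nat \<Rightarrow> (nat \<Rightarrow> nat) set" where
  "InjF n N = {f \<in> PiE {0..<n} (\<lambda>_. {..<N}). inj_on f {0..<n}}"

lemma hcb_bij: "bij_betw (hcb n) (DecL n N \<times> {p. p permutes {0..<n}}) (InjF n N)"
proof (rule bij_betwI')
  fix u v assume u: "u \<in> DecL n N \<times> {p. p permutes {0..<n}}" and v: "v \<in> DecL n N \<times> {p. p permutes {0..<n}}"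
  obtain ks p where u': "u = (ks, p)" by (cases u)
  obtain ks' p' where v': "v = (ks', p')" by (cases v)
  have ks: "length ks = n" "sorted_wrt (>) ks" and p: "p permutes {0..<n}"
    using u u' by (auto simp: DecL_def)
  have ks': "length ks' = n" "sorted_wrt (>) ks'" and p': "p' permutes {0..<n}"
    using v v' by (auto simp: DecL_def)
  show "(hcb n u = hcb n v) = (u = v)"
  proof
    assume eq: "hcb n u = hcb n v"
    have eqi: "ks ! (p i) = ks' ! (p' i)" if "i < n" for i
    proof -
      have "restrict (\<lambda>i. ks ! (p i)) {0..<n} i = restrict (\<lambda>i. ks' ! (p' i)) {0..<n} i"
        using eq by (simp add: hcb_def u' v')
      then show ?thesis using that by simp
    qed
    have im1: "(\<lambda>i. ks ! (p i)) ` {0..<n} = set ks"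
    proof -
      have "(\<lambda>i. ks ! (p i)) ` {0..<n} = (\<lambda>j. ks ! j) ` (p ` {0..<n})" by auto
      also have "p ` {0..<n} = {0..<n}" using p by (simp add: permutes_image)
      also have "(\<lambda>j. ks ! j) ` {0..<n} = set ks" using ks(1) by (auto simp: in_set_conv_nth)
      finally show ?thesis .
    qed
    have im2: "(\<lambda>i. ks' ! (p' i)) ` {0..<n} = set ks'"
    proof -
      have "(\<lambda>i. ks' ! (p' i)) ` {0..<n} = (\<lambda>j. ks' ! j) ` (p' ` {0..<n})" by auto
      also have "p' ` {0..<n} = {0..<n}" using p' by (simp add: permutes_image)
      also have "(\<lambda>j. ks' ! j) ` {0..<n} = set ks'" using ks'(1) by (auto simp: in_set_conv_nth)
      finally show ?thesis .
    qed
    have "(\<lambda>i. ks ! (p i)) ` {0..<n} = (\<lambda>i. ks' ! (p' i)) ` {0..<n}"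
      by (rule image_cong) (auto simp: eqi)
    then have "set ks = set ks'" using im1 im2 by simp
    then have kk: "ks = ks'" using DecL_unique ks(2) ks'(2) by blast
    have "p i = p' i" for i
    proof (cases "i < n")
      case True
      have "p i < n" "p' i < n" using True p p' by (auto simp: permutes_in_image)
      then show ?thesis using eqi[OF True] kk DecL_distinct[OF ks(2)] ks(1)
        by (simp add: nth_eq_iff_index_eq)
    next
      case False
      then show ?thesis using p p' by (simp add: permutes_def)
    qed
    then show "u = v" using kk u' v' by auto
  qed simp
next
  fix u assume u: "u \<in> DecL n N \<times> {p. p permutes {0..<n}}"
  obtain ks p where u': "u = (ks, p)" by (cases u)
  have ks: "length ks = n" "sorted_wrt (>) ks" "set ks \<subseteq> {..<N}" and p: "p permutes {0..<n}"
    using u u' by (auto simp: DecL_def)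
  have pi: "p i < n" if "i < n" for i using p that by (auto simp: permutes_in_image)
  have "ks ! (p i) < N" if "i < n" for i
  proof -
    have "ks ! (p i) \<in> set ks" using pi[OF that] ks(1) by simp
    then show ?thesis using ks(3) by auto
  qed
  moreover have "inj_on (\<lambda>i. ks ! (p i)) {0..<n}"
  proof (rule inj_onI)
    fix i j assume "i \<in> {0..<n}" "j \<in> {0..<n}" "ks ! (p i) = ks ! (p j)"
    then have "p i = p j" using pi DecL_distinct[OF ks(2)] ks(1)
      by (simp add: nth_eq_iff_index_eq)
    then show "i = j" using permutes_inj[OF p] by (simp add: inj_eq)
  qed
  ultimately show "hcb n u \<in> InjF n N"
    unfolding hcb_def u' InjF_def by (auto simp: inj_on_def)
next
  fix f assume f: "f \<in> InjF n N"
  define ks where "ks = rev (sorted_list_of_set (f ` {0..<n}))"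
  have inj: "inj_on f {0..<n}" and fP: "f \<in> PiE {0..<n} (\<lambda>_. {..<N})"
    using f by (auto simp: InjF_def)
  have setks: "set ks = f ` {0..<n}" by (simp add: ks_def)
  have lks: "length ks = n"
    using inj by (simp add: ks_def length_sorted_list_of_set card_image)
  have sks: "sorted_wrt (>) ks"
    unfolding ks_def sorted_wrt_rev by (rule strict_sorted_list_of_set)
  have dks: "distinct ks" using DecL_distinct[OF sks] .
  have ksN: "set ks \<subseteq> {..<N}" using fP setks by auto
  define p where "p = (\<lambda>i. if i < n then idx ks (f i) else i)"
  have pin: "p i < n" if "i < n" for i
    using that setks lks idx_props(1)[of "f i" ks] by (auto simp: p_def)
  have kp: "ks ! (p i) = f i" if "i < n" for i
    using that setks idx_props(2)[of "f i" ks] by (auto simp: p_def)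
  have "inj_on p {0..<n}"
  proof (rule inj_onI)
    fix i j assume ij: "i \<in> {0..<n}" "j \<in> {0..<n}" "p i = p j"
    then have "f i = f j" using kp by (metis atLeastLessThan_iff)
    then show "i = j" using inj ij by (auto simp: inj_on_def)
  qed
  then have pp: "p permutes {0..<n}"
    by (rule inj_on_nat_permutes) (use pin in \<open>auto simp: p_def\<close>)
  have "hcb n (ks, p) = f"
  proof
    fix i show "hcb n (ks, p) i = f i"
      using kp fP by (cases "i < n") (auto simp: hcb_def PiE_def extensional_def)
  qed
  moreover have "(ks, p) \<in> DecL n N \<times> {p. p permutes {0..<n}}"
    using lks sks ksN pp by (auto simp: DecL_def)
  ultimately show "\<exists>u\<in>DecL n N \<times> {p. p permutes {0..<n}}. f = hcb n u" by metis
qed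



theorem cauchy_binet:
  "dd n (\<lambda>i j. \<Sum>k<N. C i k * P k j) =
   (\<Sum>ks\<in>DecL n N. dd n (\<lambda>i j. C i (ks ! j)) * dd n (\<lambda>i j. P (ks ! i) j))"
proof -
  define T where "T f = (\<Prod>i=0..<n. C i (f i)) * dd n (\<lambda>i j. P (f i) j)" for f
  define PP where "PP = {p. p permutes {0..<n}}"
  define PI where "PI = PiE {0..<n} (\<lambda>_. {..<N::nat})"
  have finPP: "finite PP" unfolding PP_def by (simp add: finite_permutations)
  have finPI: "finite PI" unfolding PI_def by (simp add: finite_PiE)
  have "dd n (\<lambda>i j. \<Sum>k<N. C i k * P k j) =
        (\<Sum>p\<in>PP. of_int (sign p) * (\<Prod>i=0..<n. \<Sum>k<N. C i k * P k (p i)))"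
    by (simp add: dd_leib PP_def)
  also have "\<dots> = (\<Sum>p\<in>PP. of_int (sign p) * (\<Sum>f\<in>PI. \<Prod>i=0..<n. C i (f i) * P (f i) (p i)))"
    by (simp add: prod_sum_PiE PI_def)
  also have "\<dots> = (\<Sum>p\<in>PP. \<Sum>f\<in>PI. (\<Prod>i=0..<n. C i (f i)) * (of_int (sign p) * (\<Prod>i=0..<n. P (f i) (p i))))"
    by (simp add: sum_distrib_left prod.distrib mult.left_commute)
  also have "\<dots> = (\<Sum>f\<in>PI. \<Sum>p\<in>PP. (\<Prod>i=0..<n. C i (f i)) * (of_int (sign p) * (\<Prod>i=0..<n. P (f i) (p i))))"
    by (rule sum.swap)
  also have "\<dots> = (\<Sum>f\<in>PI. T f)"
    by (simp add: T_def dd_leib PP_def sum_distrib_left)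
  also have "\<dots> = (\<Sum>f\<in>InjF n N. T f)"
  proof (rule sum.mono_neutral_right[OF finPI])
    show "InjF n N \<subseteq> PI" by (auto simp: InjF_def PI_def)
    show "\<forall>f\<in>PI - InjF n N. T f = 0"
    proof
      fix f assume f: "f \<in> PI - InjF n N"
      then have "\<not> inj_on f {0..<n}" by (auto simp: InjF_def PI_def)
      then obtain i j where ij: "i \<noteq> j" "i < n" "j < n" "f i = f j" by (auto simp: inj_on_def)
      have "dd n (\<lambda>i j. P (f i) j) = 0"
        by (rule dd_identical_rows[OF ij(1-3)]) (simp add: ij(4))
      then show "T f = 0" by (simp add: T_def)
    qed
  qed
  also have "\<dots> = (\<Sum>u\<in>DecL n N \<times> PP. T (hcb n u))"
    by (rule sum.reindex_bij_betw[symmetric]) (simp add: hcb_bij PP_def)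
  also have "\<dots> = (\<Sum>u\<in>DecL n N \<times> PP. (case u of (ks, p) \<Rightarrow>
        dd n (\<lambda>i j. P (ks ! i) j) * (of_int (sign p) * (\<Prod>i=0..<n. C i (ks ! (p i))))))"
  proof (rule sum.cong[OF refl])
    fix u assume u: "u \<in> DecL n N \<times> PP"
    obtain ks p where u': "u = (ks, p)" by (cases u)
    have p: "p permutes {0..<n}" using u u' by (auto simp: PP_def)
    have "dd n (\<lambda>i j. P (hcb n u i) j) = dd n (\<lambda>i j. P (ks ! (p i)) j)"
      by (rule dd_cong) (simp add: hcb_def u')
    also have "\<dots> = of_int (sign p) * dd n (\<lambda>i j. P (ks ! i) j)"
      using dd_permute_rows[OF p, of "\<lambda>i j. P (ks ! i) j"] by simp
    finally have 1: "dd n (\<lambda>i j. P (hcb n u i) j) = of_int (sign p) * dd n (\<lambda>i j. P (ks ! i) j)" .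
    have 2: "(\<Prod>i=0..<n. C i (hcb n u i)) = (\<Prod>i=0..<n. C i (ks ! (p i)))"
      by (rule prod.cong) (auto simp: hcb_def u')
    show "T (hcb n u) = (case u of (ks, p) \<Rightarrow>
        dd n (\<lambda>i j. P (ks ! i) j) * (of_int (sign p) * (\<Prod>i=0..<n. C i (ks ! (p i)))))"
      unfolding T_def 1 2 by (simp add: u')
  qed
  also have "\<dots> = (\<Sum>ks\<in>DecL n N. \<Sum>p\<in>PP.
        dd n (\<lambda>i j. P (ks ! i) j) * (of_int (sign p) * (\<Prod>i=0..<n. C i (ks ! (p i)))))"
    by (simp add: sum.cartesian_product)
  also have "\<dots> = (\<Sum>ks\<in>DecL n N. dd n (\<lambda>i j. C i (ks ! j)) * dd n (\<lambda>i j. P (ks ! i) j))"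
  proof (rule sum.cong[OF refl])
    fix ks
    show "(\<Sum>p\<in>PP. dd n (\<lambda>i j. P (ks ! i) j) * (of_int (sign p) * (\<Prod>i=0..<n. C i (ks ! (p i))))) =
          dd n (\<lambda>i j. C i (ks ! j)) * dd n (\<lambda>i j. P (ks ! i) j)"
      unfolding dd_leib[of n "\<lambda>i j. C i (ks ! j)"] sum_distrib_right PP_def
      by (rule sum.cong) (simp_all add: mult_ac)
  qed
  finally show ?thesis .
qed



definition Nl :: "real \<Rightarrow> nat \<Rightarrow> real" where
  "Nl a l = Gamma (real l + a + 1) / (Gamma (real l + 1) * Gamma (a + 1))"

definition wk :: "real \<Rightarrow> nat \<Rightarrow> real" where
  "wk a k = pochhammer (a + 1) k * fact k * 2 ^ k"

definition Aq :: "real \<Rightarrow> nat \<Rightarrow> real" where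
  "Aq s k = (s + real k) ^ 2"

definition cj :: "real \<Rightarrow> real \<Rightarrow> nat \<Rightarrow> nat \<Rightarrow> real" where
  "cj a b l k = Nl a l * fpow (Aq ((a + b + 1) / 2)) ((real l + (a + b + 1) / 2) ^ 2) k / wk a k"

lemma fpow_Aq: "fpow (Aq s) ((real l + s) ^ 2) k = (-1) ^ k * pochhammer (- real l) k * pochhammer (real l + 2 * s) k"
proof -
  have "fpow (Aq s) ((real l + s) ^ 2) k = (\<Prod>j<k. (-1) * (- real l + real j) * (real l + 2 * s + real j))"
    unfolding fpow_def Aq_def by (rule prod.cong) (simp_all add: power2_eq_square algebra_simps)
  also have "\<dots> = (\<Prod>j<k. (-1::real)) * (\<Prod>j<k. - real l + real j) * (\<Prod>j<k. real l + 2 * s + real j)"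
    by (simp only: prod.distrib)
  also have "\<dots> = (-1) ^ k * pochhammer (- real l) k * pochhammer (real l + 2 * s) k"
    by (simp add: pochhammer_prod atLeast0LessThan)
  finally show ?thesis .
qed

lemma fpow_Aq_zero: "l < k \<Longrightarrow> fpow (Aq s) ((real l + s) ^ 2) k = 0"
  unfolding fpow_def Aq_def by (rule prod_zero) (auto intro!: bexI[of _ l] simp: add.commute)

lemma jacobi_expand:
  assumes "l < N"
  shows "jacobi l a b y = (\<Sum>k<N. cj a b l k * (y - 1) ^ k)"
proof -
  define s where "s = (a + b + 1) / 2"
  have c: "real l + a + b + 1 = real l + 2 * s" by (simp add: s_def)
  have trm: "pochhammer (- real l) k * pochhammer (real l + a + b + 1) k / (pochhammer (a + 1) k * fact k) * ((1 - y) / 2) ^ k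
      = fpow (Aq s) ((real l + s) ^ 2) k / wk a k * (y - 1) ^ k" for k
  proof -
    have "((1 - y) / 2) ^ k = (-1) ^ k * (y - 1) ^ k / 2 ^ k"
      by (simp add: power_divide power_minus[symmetric])
    then show ?thesis
      unfolding fpow_Aq c wk_def by (simp add: field_simps)
  qed
  have "jacobi l a b y = Nl a l * (\<Sum>k = 0..l. fpow (Aq s) ((real l + s) ^ 2) k / wk a k * (y - 1) ^ k)"
    unfolding jacobi_def hyp2F1_term_def Nl_def trm by simp
  also have "(\<Sum>k = 0..l. fpow (Aq s) ((real l + s) ^ 2) k / wk a k * (y - 1) ^ k) =
             (\<Sum>k<N. fpow (Aq s) ((real l + s) ^ 2) k / wk a k * (y - 1) ^ k)"
    by (rule sum.mono_neutral_left) (use assms in \<open>auto simp: fpow_Aq_zero\<close>)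
  finally show ?thesis
    by (simp add: cj_def s_def sum_distrib_left mult.assoc)
qed



definition kap :: "nat \<Rightarrow> nat list \<Rightarrow> nat \<Rightarrow> nat" where
  "kap n mu j = mu ! j + n - 1 - j"

lemma vandermonde_nz: "distinctn n z \<Longrightarrow> vandermonde n z \<noteq> 0"
  unfolding vandermonde_def distinctn_def by (auto simp: prod_zero_iff)

lemma vandermonde_shift: "vandermonde n (\<lambda>i. z i - c) = vandermonde n z"
  unfolding vandermonde_def by simp

lemma distinctn_shift: "distinctn n z \<Longrightarrow> distinctn n (\<lambda>i. z i - c)"
  unfolding distinctn_def by auto

lemma ScN_cong_kappa: "(\<And>i. i < n \<Longrightarrow> \<kappa> i = \<kappa>' i) \<Longrightarrow> ScN n A \<kappa> z = ScN n A \<kappa>' z"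
  unfolding ScN_def by (rule dd_cong) simp

lemma ScN_cong_z: "0 < n \<Longrightarrow> (\<And>i. i < n \<Longrightarrow> z i = z' i) \<Longrightarrow> ScN n A \<kappa> z = ScN n A \<kappa> z'"
proof -
  assume n: "0 < n" and zz: "\<And>i. i < n \<Longrightarrow> z i = z' i"
  have "(\<lambda>s. z (n - Suc s)) = (\<lambda>s. z' (n - Suc s))"
    using n zz by auto
  then show ?thesis unfolding ScN_def by simp
qed

lemma ScN_cont':
  "isCont (\<lambda>t. ScN n A \<kappa> (\<lambda>i. x i + t * real i - c)) t0"
proof -
  have "(\<lambda>t. ScN n A \<kappa> (\<lambda>i. x i + t * real i - c)) = (\<lambda>t. ScN n A \<kappa> (\<lambda>i. (x i - c) + t * real i))"
    by (simp add: algebra_simps)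
  then show ?thesis using ScN_cont[where x="\<lambda>i. x i - c" and v=real and n=n and A=A and \<kappa>=\<kappa>] by simp
qed

lemma fschur_ScN: "fschur n mu y A = ScN n A (kap n mu) y"
  unfolding fschur_def
proof (rule polyext_eq[where n=n])
  fix z assume z: "distinctn n z"
  have "det (mat n n (\<lambda>(i, j). fpow A (z i) (mu ! j + n - 1 - j))) = dd n (\<lambda>i j. fpow A (z j) (kap n mu i))"
    unfolding dd_def[symmetric] kap_def by (rule dd_transpose[symmetric])
  also have "\<dots> = ScN n A (kap n mu) z * vandermonde n z" by (rule alt_factor)
  finally show "det (mat n n (\<lambda>(i, j). fpow A (z i) (mu ! j + n - 1 - j))) / vandermonde n z = ScN n A (kap n mu) z"
    using vandermonde_nz[OF z] by simp
next
  show "isCont (\<lambda>t. ScN n A (kap n mu) (\<lambda>i. y i + t * real i)) 0" by (rule ScN_cont)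
qed

lemma schur_ScN: "schur n mu y = ScN n (\<lambda>_. 0) (kap n mu) y"
  unfolding schur_def by (rule fschur_ScN)

lemma fpow0: "fpow (\<lambda>_. 0) y k = y ^ k"
  unfolding fpow_def by simp

lemma strict_dec_gap:
  assumes "sorted_wrt (>) (ks::nat list)" "i \<le> j" "j < length ks"
  shows "ks ! j + (j - i) \<le> ks ! i"
  using assms(2,3)
proof (induction j)
  case 0
  then show ?case by simp
next
  case (Suc j)
  show ?case
  proof (cases "i = Suc j")
    case True then show ?thesis by simp
  next
    case False
    then have "i \<le> j" using Suc by simp
    then have "ks ! j + (j - i) \<le> ks ! i" using Suc by simp
    moreover have "ks ! Suc j < ks ! j"
      using assms(1) Suc.prems by (auto simp: sorted_wrt_iff_nth_less)
    ultimately show ?thesis using \<open>i \<le> j\<close> by simp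
  qed
qed

definition PF :: "nat \<Rightarrow> nat \<Rightarrow> nat list set" where
  "PF n N = {mu \<in> partitions n. mu ! 0 + n - 1 < N}"

definition kl :: "nat \<Rightarrow> nat list \<Rightarrow> nat list" where
  "kl n mu = map (kap n mu) [0..<n]"

definition ml :: "nat \<Rightarrow> nat list \<Rightarrow> nat list" where
  "ml n ks = map (\<lambda>j. ks ! j - (n - 1 - j)) [0..<n]"

lemma part_nth_le: "mu \<in> partitions n \<Longrightarrow> i \<le> j \<Longrightarrow> j < n \<Longrightarrow> mu ! j \<le> mu ! i"
  unfolding partitions_def sorted_wrt_iff_nth_less
  by (cases "i = j") auto

lemma PF_finite: "finite (PF n N)"
proof (rule finite_subset)
  show "PF n N \<subseteq> {xs. set xs \<subseteq> {..N} \<and> length xs = n}"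
  proof
    fix mu assume mu: "mu \<in> PF n N"
    then have p: "mu \<in> partitions n" and l: "length mu = n" by (auto simp: PF_def partitions_def)
    have "x \<le> N" if "x \<in> set mu" for x
    proof -
      obtain j where j0: "j < length mu" "mu ! j = x" using \<open>x \<in> set mu\<close> by (metis in_set_conv_nth)
      then have j: "j < n" "mu ! j = x" using l by auto
      have "mu ! j \<le> mu ! 0" using part_nth_le[OF p, of 0 j] j by simp
      then show ?thesis using j mu by (auto simp: PF_def)
    qed
    then show "mu \<in> {xs. set xs \<subseteq> {..N} \<and> length xs = n}" using l by auto
  qed
  show "finite {xs. set xs \<subseteq> {..N} \<and> length xs = n}"
    by (rule finite_lists_length_eq) simp
qed

lemma sum_DecL_PF:
  assumes n: "0 < n"
  shows "(\<Sum>ks\<in>DecL n N. f ks) = (\<Sum>mu\<in>PF n N. f (kl n mu))"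
proof (rule sum.reindex_bij_witness[where i="kl n" and j="ml n"])
  fix mu assume mu: "mu \<in> PF n N"
  then have p: "mu \<in> partitions n" and l: "length mu = n" and m0: "mu ! 0 + n - 1 < N"
    by (auto simp: PF_def partitions_def)
  show "ml n (kl n mu) = mu"
    unfolding ml_def kl_def kap_def using l
    by (intro nth_equalityI) auto
  have "kap n mu j < kap n mu i" if "i < j" "j < n" for i j
    using part_nth_le[OF p, of i j] that unfolding kap_def by arith
  then have "sorted_wrt (>) (kl n mu)"
    unfolding sorted_wrt_iff_nth_less kl_def by auto
  moreover have "set (kl n mu) \<subseteq> {..<N}"
  proof
    fix x assume "x \<in> set (kl n mu)"
    then obtain j where j: "j < n" "x = mu ! j + n - 1 - j" by (auto simp: kl_def kap_def)
    have "mu ! j \<le> mu ! 0" using part_nth_le[OF p, of 0 j] j by simp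
    then show "x \<in> {..<N}" using j m0 by auto
  qed
  ultimately show "kl n mu \<in> DecL n N" by (simp add: DecL_def kl_def)
next
  fix ks assume ks: "ks \<in> DecL n N"
  then have l: "length ks = n" and s: "sorted_wrt (>) ks" and kN: "set ks \<subseteq> {..<N}"
    by (auto simp: DecL_def)
  have gap: "ks ! j + (j - i) \<le> ks ! i" if "i \<le> j" "j < n" for i j
    using strict_dec_gap[OF s that(1)] that l by simp
  have ge: "n - 1 - j \<le> ks ! j" if "j < n" for j
    using gap[of j "n - 1"] that n by arith
  have "(ks ! i - (n - 1 - i)) + n - 1 - i = ks ! i" if "i < n" for i
    using ge[OF that] that by arith
  then show klml: "kl n (ml n ks) = ks"
    unfolding ml_def kl_def kap_def using l
    by (intro nth_equalityI) auto
  then show "f (kl n (ml n ks)) = f ks" by simp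
  have "ks ! 0 \<in> set ks" using l n by simp
  then have k0: "ks ! 0 < N" using kN by auto
  have "ks ! j - (n - 1 - j) \<le> ks ! i - (n - 1 - i)" if "i < j" "j < n" for i j
    using gap[of i j] ge[of i] ge[of j] that by arith
  then have "ml n ks \<in> partitions n"
    unfolding partitions_def ml_def sorted_wrt_iff_nth_less by auto
  moreover have "ml n ks ! 0 + n - 1 < N"
    using n k0 ge[of 0] by (simp add: ml_def)
  ultimately show "ml n ks \<in> PF n N" by (simp add: PF_def)
qed



lemma wk_Gamma:
  assumes "a > -1"
  shows "wk a k = Gamma (real k + 1) * Gamma (real k + a + 1) / Gamma (a + 1) * 2 ^ k"
proof -
  have "a + 1 \<notin> \<int>\<^sub>\<le>\<^sub>0" using assms by auto
  then have "pochhammer (a + 1) k = Gamma (a + 1 + real k) / Gamma (a + 1)"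
    by (rule pochhammer_Gamma)
  moreover have "Gamma (1 + real k) = fact k"
    by (rule Gamma_fact)
  then have "fact k = Gamma (real k + 1)" by (simp add: add.commute)
  ultimately show ?thesis unfolding wk_def by (simp add: algebra_simps)
qed

lemma wk_pos: "a > -1 \<Longrightarrow> wk a k > 0"
  unfolding wk_def by (intro mult_pos_pos pochhammer_pos) auto

lemma cconst_eq:
  assumes a: "a > -1" and l: "length mu = n"
  shows "cconst n mu a = (\<Prod>j<n. wk a (kap n mu j)) / (\<Prod>j<n. wk a (n - 1 - j))"
proof -
  have Ga: "Gamma (a + 1) > 0" using a by (intro Gamma_real_pos) simp
  have t: "wk a (kap n mu j) / wk a (n - 1 - j) =
     Gamma (real (mu ! j + n - 1 - j) + 1) * Gamma (real (mu ! j + n - 1 - j) + a + 1)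
            / (Gamma (real (n - 1 - j) + 1) * Gamma (real (n - 1 - j) + a + 1)) * 2 ^ (mu ! j)"
    if j: "j < n" for j
  proof -
    have k': "mu ! j + n - 1 - j = mu ! j + (n - 1 - j)" using j by simp
    have k: "kap n mu j = mu ! j + (n - 1 - j)" using j by (simp add: kap_def)
    have g1: "Gamma (real (n - 1 - j) + 1) > 0" "Gamma (real (n - 1 - j) + a + 1) > 0"
      using a by (auto intro!: Gamma_real_pos)
    show ?thesis
      unfolding wk_Gamma[OF a] k k' using Ga g1
      by (simp add: power_add field_simps)
  qed
  have "(\<Prod>j<n. wk a (kap n mu j)) / (\<Prod>j<n. wk a (n - 1 - j)) =
        (\<Prod>j<n. wk a (kap n mu j) / wk a (n - 1 - j))"
    by (simp add: prod_dividef)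
  also have "\<dots> = (\<Prod>j<n. Gamma (real (mu ! j + n - 1 - j) + 1) * Gamma (real (mu ! j + n - 1 - j) + a + 1)
            / (Gamma (real (n - 1 - j) + 1) * Gamma (real (n - 1 - j) + a + 1))) * (\<Prod>j<n. 2 ^ (mu ! j))"
    unfolding prod.distrib[symmetric] by (rule prod.cong[OF refl]) (rule t, simp)
  also have "(\<Prod>j<n. (2::real) ^ (mu ! j)) = 2 ^ sum_list mu"
    by (simp add: power_sum sum_list_sum_nth l atLeast0LessThan)
  finally show ?thesis unfolding cconst_def by simp
qed



theorem proposition7p4:
  fixes a b :: real and n :: nat and lam :: "nat list" and x :: "nat \<Rightarrow> real"
  assumes "a > -1" and "b > -1" and "n \<ge> 1" and "lam \<in> partitions n"
  shows "((\<lambda>mu. interpI n mu (\<lambda>i. real (lam ! i)) ((a + b + 1) / 2 + real n)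
                 * schur n mu (\<lambda>i. x i - 1) / cconst n mu a)
           has_sum (jacobiP n lam a b x / jacobiP n lam a b (\<lambda>_. 1))) (partitions n)
       \<and> (\<forall>mu \<in> partitions n.
            interpI n mu (\<lambda>i. real (lam ! i)) ((a + b + 1) / 2 + real n)
            = fschur n mu (\<lambda>i. (real (lam ! i + n - 1 - i) + (a + b + 1) / 2) ^ 2)
                (\<lambda>k. ((a + b + 1) / 2 + real k) ^ 2))"
proof -
  note a = assms(1) and b = assms(2) and lamp = assms(4)
  have n0: "0 < n" using assms(3) by simp
  define s where "s = (a + b + 1) / 2"
  define l where "l i = lam ! i + n - 1 - i" for i
  define N where "N = l 0 + 1"
  define Lq where "Lq i = (real (l i) + s) ^ 2" for i
  have llam: "length lam = n" using lamp by (simp add: partitions_def)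
  have l_le: "l i \<le> l 0" if "i < n" for i
    using part_nth_le[OF lamp, of 0 i] that unfolding l_def by arith
  have l_lt: "l i < N" if "i < n" for i
    using l_le[OF that] by (simp add: N_def)
  have l_dec: "l j < l i" if "i < j" "j < n" for i j
    using part_nth_le[OF lamp, of i j] that unfolding l_def by arith
  have s2: "2 * s > -1" using a b by (simp add: s_def)
  have distL: "distinctn n Lq"
    unfolding distinctn_def
  proof (intro allI impI)
    fix i j assume ij: "i < n" "j < n" "i \<noteq> j"
    have ne: "(real p + s) ^ 2 \<noteq> (real q + s) ^ 2" if "q < p" for p q :: nat
    proof
      assume "(real p + s) ^ 2 = (real q + s) ^ 2"
      then have "real p + s = real q + s \<or> real p + s = - (real q + s)"
        by (simp add: power2_eq_iff)
      then show False using that s2 by auto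
    qed
    show "Lq i \<noteq> Lq j"
    proof (cases "i < j")
      case True then show ?thesis using ne[OF l_dec[OF True ij(2)]] by (simp add: Lq_def)
    next
      case False then have "j < i" using ij by simp
      then show ?thesis using ne[OF l_dec[OF \<open>j < i\<close> ij(1)]] by (simp add: Lq_def)
    qed
  qed
  have VL: "vandermonde n Lq \<noteq> 0" by (rule vandermonde_nz[OF distL])
  have Lq_eq: "Lq = (\<lambda>i. (real (lam ! i + n - 1 - i) + (a + b + 1) / 2) ^ 2)"
    by (simp add: Lq_def l_def s_def fun_eq_iff)
  have Aq_eq: "Aq s = (\<lambda>k. ((a + b + 1) / 2 + real k) ^ 2)"
    by (simp add: Aq_def s_def fun_eq_iff)
  define I where "I mu = ScN n (Aq s) (kap n mu) Lq" for mu
  have interp: "interpI n mu (\<lambda>i. real (lam ! i)) ((a + b + 1) / 2 + real n) = I mu" for mu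
  proof -
    have A: "(\<lambda>k. ((a + b + 1) / 2 + real n - real n + real k) ^ 2) = Aq s"
      by (simp add: Aq_def s_def fun_eq_iff)
    have Y: "(real (lam ! i) + ((a + b + 1) / 2 + real n) - real (i + 1)) ^ 2 = Lq i" if "i < n" for i
    proof -
      have "real (l i) = real (lam ! i) + real n - 1 - real i"
        using that unfolding l_def by (simp add: of_nat_diff)
      then have "real (lam ! i) + ((a + b + 1) / 2 + real n) - real (i + 1) = real (l i) + s"
        by (simp add: s_def)
      then show ?thesis by (simp add: Lq_def)
    qed
    show ?thesis
      unfolding interpI_def fschur_ScN A I_def
      by (rule ScN_cong_z[OF n0], rule Y, assumption)
  qed
  have conj2: "\<forall>mu \<in> partitions n.
            interpI n mu (\<lambda>i. real (lam ! i)) ((a + b + 1) / 2 + real n)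
            = fschur n mu (\<lambda>i. (real (lam ! i + n - 1 - i) + (a + b + 1) / 2) ^ 2)
                (\<lambda>k. ((a + b + 1) / 2 + real k) ^ 2)"
    unfolding interp Lq_eq[symmetric] Aq_eq[symmetric] fschur_ScN I_def by simp

  define Dc where "Dc ks = dd n (\<lambda>i j. cj a b (l i) (ks ! j))" for ks
  have expand: "det (mat n n (\<lambda>(i, j). jacobi (lam ! i + n - 1 - i) a b (z j))) / vandermonde n z =
        (\<Sum>ks\<in>DecL n N. Dc ks * ScN n (\<lambda>_. 0) (\<lambda>i. ks ! i) (\<lambda>i. z i - 1))" if z: "distinctn n z" for z
  proof -
    have "det (mat n n (\<lambda>(i, j). jacobi (lam ! i + n - 1 - i) a b (z j))) = dd n (\<lambda>i j. jacobi (l i) a b (z j))"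
      by (simp add: dd_def l_def)
    also have "\<dots> = dd n (\<lambda>i j. \<Sum>k<N. cj a b (l i) k * (z j - 1) ^ k)"
      by (rule dd_cong) (simp add: jacobi_expand[OF l_lt])
    also have "\<dots> = (\<Sum>ks\<in>DecL n N. Dc ks * dd n (\<lambda>i j. (z j - 1) ^ (ks ! i)))"
      unfolding Dc_def by (rule cauchy_binet)
    also have "\<dots> = (\<Sum>ks\<in>DecL n N. Dc ks * ScN n (\<lambda>_. 0) (\<lambda>i. ks ! i) (\<lambda>i. z i - 1) * vandermonde n z)"
    proof (rule sum.cong[OF refl])
      fix ks
      have "dd n (\<lambda>i j. (z j - 1) ^ (ks ! i)) = dd n (\<lambda>i j. fpow (\<lambda>_. 0) ((\<lambda>i. z i - 1) j) ((\<lambda>i. ks ! i) i))"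
        by (simp add: fpow0)
      also have "\<dots> = ScN n (\<lambda>_. 0) (\<lambda>i. ks ! i) (\<lambda>i. z i - 1) * vandermonde n (\<lambda>i. z i - 1)"
        by (rule alt_factor)
      finally show "Dc ks * dd n (\<lambda>i j. (z j - 1) ^ (ks ! i)) = Dc ks * ScN n (\<lambda>_. 0) (\<lambda>i. ks ! i) (\<lambda>i. z i - 1) * vandermonde n z"
        by (simp add: vandermonde_shift)
    qed
    finally show ?thesis using vandermonde_nz[OF z] by (simp add: sum_divide_distrib)
  qed
  have jP: "jacobiP n lam a b y = (\<Sum>ks\<in>DecL n N. Dc ks * ScN n (\<lambda>_. 0) (\<lambda>i. ks ! i) (\<lambda>i. y i - 1))" for y
    unfolding jacobiP_def
    by (rule polyext_eq[where n=n]) (erule expand, auto intro!: continuous_intros ScN_cont')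
  define Wm where "Wm mu = (\<Prod>j<n. 1 / wk a (kap n mu j))" for mu
  define NN where "NN = (\<Prod>i<n. Nl a (l i))"
  have kl_nth: "kl n mu ! i = kap n mu i" if "i < n" for mu i
    using that by (simp add: kl_def)
  have Dc_kl: "Dc (kl n mu) = NN * Wm mu * (I mu * vandermonde n Lq)" for mu
  proof -
    have "Dc (kl n mu) = dd n (\<lambda>i j. Nl a (l i) * (1 / wk a (kap n mu j)) * fpow (Aq s) (Lq i) (kap n mu j))"
      unfolding Dc_def by (rule dd_cong) (simp add: kl_nth cj_def Lq_def s_def)
    also have "\<dots> = NN * Wm mu * dd n (\<lambda>i j. fpow (Aq s) (Lq i) (kap n mu j))"
      unfolding NN_def Wm_def by (rule dd_scale)
    also have "dd n (\<lambda>i j. fpow (Aq s) (Lq i) (kap n mu j)) = dd n (\<lambda>i j. fpow (Aq s) (Lq j) (kap n mu i))"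
      by (rule dd_transpose[symmetric])
    also have "\<dots> = I mu * vandermonde n Lq" unfolding I_def by (rule alt_factor)
    finally show ?thesis .
  qed
  have jP2: "jacobiP n lam a b y = (\<Sum>mu\<in>PF n N. NN * Wm mu * (I mu * vandermonde n Lq) * ScN n (\<lambda>_. 0) (kap n mu) (\<lambda>i. y i - 1))" for y
    unfolding jP sum_DecL_PF[OF n0]
  proof (rule sum.cong[OF refl])
    fix mu
    have "ScN n (\<lambda>_. 0) (\<lambda>i. kl n mu ! i) (\<lambda>i. y i - 1) = ScN n (\<lambda>_. 0) (kap n mu) (\<lambda>i. y i - 1)"
      by (rule ScN_cong_kappa) (simp add: kl_nth)
    then show "Dc (kl n mu) * ScN n (\<lambda>_. 0) (\<lambda>i. kl n mu ! i) (\<lambda>i. y i - 1) =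
          NN * Wm mu * (I mu * vandermonde n Lq) * ScN n (\<lambda>_. 0) (kap n mu) (\<lambda>i. y i - 1)"
      by (simp add: Dc_kl)
  qed
  define m0 where "m0 = replicate n (0::nat)"
  have m0PF: "m0 \<in> PF n N"
    unfolding m0_def PF_def partitions_def N_def l_def using n0
    by (auto simp: sorted_wrt_iff_nth_less)
  have kap0: "kap n m0 i = n - Suc i" if "i < n" for i
    using that by (simp add: kap_def m0_def)
  have I0: "I m0 = 1"
  proof -
    have "I m0 = ScN n (Aq s) (\<lambda>i. n - Suc i) Lq"
      unfolding I_def by (rule ScN_cong_kappa) (simp add: kap0)
    then show ?thesis by (simp add: ScN_delta)
  qed
  have S0: "ScN n (\<lambda>_. 0) (kap n mu) (\<lambda>_. 0) = (if mu = m0 then 1 else 0)" if mu: "mu \<in> PF n N" for mu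
  proof (cases "mu = m0")
    case True
    have "ScN n (\<lambda>_. 0) (kap n mu) (\<lambda>_. 0) = ScN n (\<lambda>_. 0) (\<lambda>i. n - Suc i) (\<lambda>_. 0)"
      by (rule ScN_cong_kappa) (simp add: kap0 True)
    then show ?thesis using True by (simp add: ScN_delta)
  next
    case False
    have mp: "mu \<in> partitions n" and lm: "length mu = n" using mu by (auto simp: PF_def partitions_def)
    have "mu ! 0 \<noteq> 0"
    proof
      assume z: "mu ! 0 = 0"
      have "mu = m0"
        unfolding m0_def
      proof (rule nth_equalityI)
        show "length mu = length (replicate n 0)" using lm by simp
        fix i assume "i < length mu"
        then show "mu ! i = replicate n 0 ! i"
          using part_nth_le[OF mp, of 0 i] z lm by simp
      qed
      then show False using False by simp
    qed
    then have "n \<le> kap n mu 0" by (simp add: kap_def)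
    then show ?thesis using False ScN_zero_pt[OF n0] by simp
  qed
  have finPF: "finite (PF n N)" by (rule PF_finite)
  have j1: "jacobiP n lam a b (\<lambda>_. 1) = NN * Wm m0 * vandermonde n Lq"
  proof -
    have "jacobiP n lam a b (\<lambda>_. 1) = (\<Sum>mu\<in>PF n N. if mu = m0 then NN * Wm mu * (I mu * vandermonde n Lq) else 0)"
      unfolding jP2 by (rule sum.cong[OF refl]) (simp add: S0)
    also have "\<dots> = NN * Wm m0 * vandermonde n Lq"
      using finPF m0PF I0 by simp
    finally show ?thesis .
  qed
  have jx: "jacobiP n lam a b x = (\<Sum>mu\<in>PF n N. NN * Wm mu * (I mu * vandermonde n Lq) * schur n mu (\<lambda>i. x i - 1))"
    unfolding jP2 schur_ScN ..
  have NNpos: "NN > 0"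
    unfolding NN_def Nl_def using a
    by (intro prod_pos divide_pos_pos mult_pos_pos Gamma_real_pos) auto
  have wkprod: "Wm mu = 1 / (\<Prod>j<n. wk a (kap n mu j))" for mu
    by (simp add: Wm_def prod_dividef)
  have Wm0: "Wm m0 = 1 / (\<Prod>j<n. wk a (n - 1 - j))"
    unfolding wkprod by (simp add: kap0)
  have wkp: "(\<Prod>j<n. wk a (kap n mu j)) > 0" for mu
    using wk_pos[OF a] by (intro prod_pos) auto
  have wk0p: "(\<Prod>j<n. wk a (n - 1 - j)) > 0"
    using wk_pos[OF a] by (intro prod_pos) auto
  have ratio: "Wm mu / Wm m0 = 1 / cconst n mu a" if "mu \<in> PF n N" for mu
  proof -
    have "length mu = n" using that by (simp add: PF_def partitions_def)
    then have c: "cconst n mu a = (\<Prod>j<n. wk a (kap n mu j)) / (\<Prod>j<n. wk a (n - 1 - j))"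
      by (rule cconst_eq[OF a])
    show ?thesis
      unfolding c Wm0 wkprod[of mu] using wkp[of mu] wk0p by simp
  qed
  have Izero: "I mu = 0" if "N \<le> kap n mu 0" for mu
  proof -
    have "dd n (\<lambda>i j. fpow (Aq s) (Lq j) (kap n mu i)) = 0"
    proof (rule dd_row0[OF n0])
      fix j assume "j < n"
      then have "l j < kap n mu 0" using l_lt that by (meson less_le_trans)
      then show "fpow (Aq s) (Lq j) (kap n mu 0) = 0"
        unfolding Lq_def by (rule fpow_Aq_zero)
    qed
    then show ?thesis using alt_factor[of n "Aq s" Lq "kap n mu"] VL unfolding I_def by simp
  qed
  let ?T = "\<lambda>mu. interpI n mu (\<lambda>i. real (lam ! i)) ((a + b + 1) / 2 + real n)
                 * schur n mu (\<lambda>i. x i - 1) / cconst n mu a"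
  have "(?T has_sum (jacobiP n lam a b x / jacobiP n lam a b (\<lambda>_. 1))) (partitions n)"
  proof (rule has_sum_finite_neutralI[OF finPF])
    show "PF n N \<subseteq> partitions n" by (auto simp: PF_def)
    show "?T mu = 0" if "mu \<in> partitions n - PF n N" for mu
    proof -
      have "N \<le> kap n mu 0" using that by (auto simp: PF_def kap_def)
      then show ?thesis by (simp add: interp Izero)
    qed
    have "jacobiP n lam a b x / jacobiP n lam a b (\<lambda>_. 1) =
          (\<Sum>mu\<in>PF n N. (Wm mu / Wm m0) * I mu * schur n mu (\<lambda>i. x i - 1))"
      unfolding jx j1 sum_divide_distrib
      using NNpos VL wk0p by (intro sum.cong refl) (simp add: Wm0 field_simps)
    also have "\<dots> = (\<Sum>mu\<in>PF n N. ?T mu)"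
      by (rule sum.cong[OF refl]) (simp add: ratio interp)
    finally show "jacobiP n lam a b x / jacobiP n lam a b (\<lambda>_. 1) = (\<Sum>mu\<in>PF n N. ?T mu)" .
  qed
  then show ?thesis using conj2 by simp
qed

end
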